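(* Let $X$ be a $C^*$-correspondence over $A$ with left action $\phi$, and let $Y=X\oplus T$ over $B=A\oplus T$ be formed by adding the tail $T=(\ker\phi)^{(\mathbb N)}$. Let $(\tilde\pi,\tilde t)$ be a representation of $Y$ in a $C^*$-algebra that is coisometric on the ideal $\ker\phi\oplus T$ of $B$ (i.e. $\tilde\pi^{(1)}(\phi_B(b))=\tilde\pi(b)$ for all $b\in\ker\phi\oplus T$), and suppose that $a\mapsto\tilde\pi(a,\vec 0)$ is injective on $A$. For $f\in\ker\phi$ and $i\in\mathbb N$ let $\epsilon_i(f)\in T$ be the sequence with $f$ in the $i$-th position and $0$ elsewhere. Then for every $i\in\mathbb N$ and $f\in\ker\phi$, $\tilde\pi(0,\epsilon_i(f))=0$ implies $f=0$.
   Context: A $C^*$-correspondence over $A$ is a right Hilbert $A$-module $X$ with inner product $\langle\cdot,\cdot\rangle_A$ and a $*$-homomorphism $\phi:A\to\mathcal L(X)$; $\Theta_{\xi,\eta}(\zeta)=\xi\langle\eta,\zeta\rangle_A$, $\mathcal K(X)=\overline{\mathrm{span}}\{\Theta_{\xi,\eta}\}$. A representation of a correspondence $Y$ over $B$ in a $C^*$-algebra $C$ is a pair $(\tilde\pi,\tilde t)$ with $\tilde\pi:B\to C$ a $*$-homomorphism and $\tilde t:Y\to C$ linear such that $\tilde t(y)^*\tilde t(y')=\tilde\pi(\langle y,y'\rangle_B)$, $\tilde t(\phi_B(b)y)=\tilde\pi(b)\tilde t(y)$, $\tilde t(yb)=\tilde t(y)\tilde\pi(b)$; $\tilde\pi^{(1)}:\mathcal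 K(Y)\to C$ is the $*$-homomorphism with $\tilde\pi^{(1)}(\Theta_{y,y'})=\tilde t(y)\tilde t(y')^*$. Adding the tail: $T:=(\ker\phi)^{(\mathbb N)}$ is the $c_0$-direct sum of copies of $\ker\phi$ (elements $\vec f=(f_1,f_2,\dots)$, coordinatewise operations), a Hilbert module over itself with $\langle\vec f,\vec g\rangle=\vec f^*\vec g$; $B:=A\oplus T$, $Y:=X\oplus T$ with $(\xi,\vec f)(a,\vec g)=(\xi a,\vec f\vec g)$, $\langle(\xi,\vec f),(\nu,\vec g)\rangle_B=(\langle\xi,\nu\rangle_A,\vec f^*\vec g)$, $\phi_B(a,\vec f)(\xi,\vec g)=(\phi(a)\xi,(ag_1,f_1g_2,f_2g_3,\dots))$. *)

theory Defs
  imports Complex_Main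
begin

class scaleC = fixes scaleC :: "complex \<Rightarrow> 'a \<Rightarrow> 'a" (infixr "*\<^sub>C" 75)

class complex_vector = ab_group_add + scaleC +
  assumes scaleC_add_right: "c *\<^sub>C (x + y) = c *\<^sub>C x + c *\<^sub>C y"
    and scaleC_add_left: "(c + d) *\<^sub>C x = c *\<^sub>C x + d *\<^sub>C x"
    and scaleC_scaleC: "c *\<^sub>C d *\<^sub>C x = (c * d) *\<^sub>C x"
    and scaleC_one: "1 *\<^sub>C x = x"

class star_op = fixes star :: "'a \<Rightarrow> 'a"

class cstar_algebra = real_normed_algebra + banach + complex_vector + star_op +
  assumes scaleR_scaleC: "scaleR r x = complex_of_real r *\<^sub>C x"
    and norm_scaleC: "norm (c *\<^sub>C x) = cmod c * norm x"
    and mult_scaleC_left: "(c *\<^sub>C x) * y = c *\<^sub>C (x * y)"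
    and mult_scaleC_right: "x * (c *\<^sub>C y) = c *\<^sub>C (x * y)"
    and star_star: "star (star x) = x"
    and star_add: "star (x + y) = star x + star y"
    and star_scaleC: "star (c *\<^sub>C x) = cnj c *\<^sub>C star x"
    and star_mult: "star (x * y) = star y * star x"
    and cstar_identity: "norm (star x * x) = norm x * norm x"

definition positive :: "'a::cstar_algebra \<Rightarrow> bool" where
  "positive a \<longleftrightarrow> (\<exists>b. a = star b * b)"

definition hm_norm :: "('x \<Rightarrow> 'x \<Rightarrow> 'a::cstar_algebra) \<Rightarrow> 'x \<Rightarrow> real" where
  "hm_norm ip x = sqrt (norm (ip x x))"

definition hilbert_module ::
  "('x::complex_vector \<Rightarrow> 'a::cstar_algebra \<Rightarrow> 'x) \<Rightarrow> ('x \<Rightarrow> 'x \<Rightarrow> 'a) \<Rightarrow> bool" where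
  "hilbert_module rm ip \<longleftrightarrow>
     (\<forall>x y a. rm (x + y) a = rm x a + rm y a) \<and>
     (\<forall>x a b. rm x (a + b) = rm x a + rm x b) \<and>
     (\<forall>x a b. rm x (a * b) = rm (rm x a) b) \<and>
     (\<forall>c x a. rm (c *\<^sub>C x) a = c *\<^sub>C rm x a) \<and>
     (\<forall>c x a. rm x (c *\<^sub>C a) = c *\<^sub>C rm x a) \<and>
     (\<forall>x y z. ip x (y + z) = ip x y + ip x z) \<and>
     (\<forall>c x y. ip x (c *\<^sub>C y) = c *\<^sub>C ip x y) \<and>
     (\<forall>x y a. ip x (rm y a) = ip x y * a) \<and>
     (\<forall>x y. ip y x = star (ip x y)) \<and>
     (\<forall>x. positive (ip x x)) \<and>
     (\<forall>x. ip x x = 0 \<longrightarrow> x = 0) \<and>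
     (\<forall>s. (\<forall>e>0. \<exists>N. \<forall>m\<ge>N. \<forall>n\<ge>N. hm_norm ip (s m - s n) < e)
          \<longrightarrow> (\<exists>l. (\<lambda>n. hm_norm ip (s n - l)) \<longlonglongrightarrow> 0))"

text \<open>C*-correspondence: phi is a *-homomorphism A -> L(X) (phi a adjointable with adjoint phi (a*)).\<close>

definition correspondence ::
  "('x::complex_vector \<Rightarrow> 'a::cstar_algebra \<Rightarrow> 'x) \<Rightarrow> ('x \<Rightarrow> 'x \<Rightarrow> 'a) \<Rightarrow> ('a \<Rightarrow> 'x \<Rightarrow> 'x) \<Rightarrow> bool" where
  "correspondence rm ip phi \<longleftrightarrow> hilbert_module rm ip \<and>
     (\<forall>a x y. ip (phi a x) y = ip x (phi (star a) y)) \<and>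
     (\<forall>a b x. phi (a + b) x = phi a x + phi b x) \<and>
     (\<forall>c a x. phi (c *\<^sub>C a) x = c *\<^sub>C phi a x) \<and>
     (\<forall>a b x. phi (a * b) x = phi a (phi b x))"

definition kerphi :: "('a::cstar_algebra \<Rightarrow> 'x::complex_vector \<Rightarrow> 'x) \<Rightarrow> 'a set" where
  "kerphi phi = {a. \<forall>x. phi a x = 0}"

text \<open>T = c_0-direct sum of copies of ker phi; coordinates indexed by nat (0,1,2,...).\<close>

definition tailT :: "('a::cstar_algebra \<Rightarrow> 'x::complex_vector \<Rightarrow> 'x) \<Rightarrow> (nat \<Rightarrow> 'a) set" where
  "tailT phi = {f. (\<forall>n. f n \<in> kerphi phi) \<and> f \<longlonglongrightarrow> 0}"

definition carrierB :: "('a::cstar_algebra \<Rightarrow> 'x::complex_vector \<Rightarrow> 'x) \<Rightarrow> ('a \<times> (nat \<Rightarrow> 'a)) set" where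
  "carrierB phi = UNIV \<times> tailT phi"

definition carrierY :: "('a::cstar_algebra \<Rightarrow> 'x::complex_vector \<Rightarrow> 'x) \<Rightarrow> ('x \<times> (nat \<Rightarrow> 'a)) set" where
  "carrierY phi = UNIV \<times> tailT phi"

definition eps :: "nat \<Rightarrow> 'a::zero \<Rightarrow> nat \<Rightarrow> 'a" where
  "eps i f = (\<lambda>n. if n = i then f else 0)"

fun addB :: "'a::cstar_algebra \<times> (nat \<Rightarrow> 'a) \<Rightarrow> 'a \<times> (nat \<Rightarrow> 'a) \<Rightarrow> 'a \<times> (nat \<Rightarrow> 'a)" where
  "addB (a, f) (b, g) = (a + b, \<lambda>n. f n + g n)"
fun scalB :: "complex \<Rightarrow> 'a::cstar_algebra \<times> (nat \<Rightarrow> 'a) \<Rightarrow> 'a \<times> (nat \<Rightarrow> 'a)" where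
  "scalB c (a, f) = (c *\<^sub>C a, \<lambda>n. c *\<^sub>C f n)"
fun multB :: "'a::cstar_algebra \<times> (nat \<Rightarrow> 'a) \<Rightarrow> 'a \<times> (nat \<Rightarrow> 'a) \<Rightarrow> 'a \<times> (nat \<Rightarrow> 'a)" where
  "multB (a, f) (b, g) = (a * b, \<lambda>n. f n * g n)"
fun starB :: "'a::cstar_algebra \<times> (nat \<Rightarrow> 'a) \<Rightarrow> 'a \<times> (nat \<Rightarrow> 'a)" where
  "starB (a, f) = (star a, \<lambda>n. star (f n))"
fun normB :: "'a::cstar_algebra \<times> (nat \<Rightarrow> 'a) \<Rightarrow> real" where
  "normB (a, f) = max (norm a) (SUP n. norm (f n))"

fun addY :: "'x::complex_vector \<times> (nat \<Rightarrow> 'a::cstar_algebra) \<Rightarrow> 'x \<times> (nat \<Rightarrow> 'a) \<Rightarrow> 'x \<times> (nat \<Rightarrow> 'a)" where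
  "addY (x, f) (y, g) = (x + y, \<lambda>n. f n + g n)"
fun scalY :: "complex \<Rightarrow> 'x::complex_vector \<times> (nat \<Rightarrow> 'a::cstar_algebra) \<Rightarrow> 'x \<times> (nat \<Rightarrow> 'a)" where
  "scalY c (x, f) = (c *\<^sub>C x, \<lambda>n. c *\<^sub>C f n)"
definition zeroY :: "'x::complex_vector \<times> (nat \<Rightarrow> 'a::cstar_algebra)" where
  "zeroY = (0, \<lambda>n. 0)"

fun rmulY :: "('x::complex_vector \<Rightarrow> 'a::cstar_algebra \<Rightarrow> 'x) \<Rightarrow>
    'x \<times> (nat \<Rightarrow> 'a) \<Rightarrow> 'a \<times> (nat \<Rightarrow> 'a) \<Rightarrow> 'x \<times> (nat \<Rightarrow> 'a)" where
  "rmulY rm (x, f) (a, g) = (rm x a, \<lambda>n. f n * g n)"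

fun ipY :: "('x::complex_vector \<Rightarrow> 'x \<Rightarrow> 'a::cstar_algebra) \<Rightarrow>
    'x \<times> (nat \<Rightarrow> 'a) \<Rightarrow> 'x \<times> (nat \<Rightarrow> 'a) \<Rightarrow> 'a \<times> (nat \<Rightarrow> 'a)" where
  "ipY ip (x, f) (y, g) = (ip x y, \<lambda>n. star (f n) * g n)"

fun phiB :: "('a::cstar_algebra \<Rightarrow> 'x::complex_vector \<Rightarrow> 'x) \<Rightarrow>
    'a \<times> (nat \<Rightarrow> 'a) \<Rightarrow> 'x \<times> (nat \<Rightarrow> 'a) \<Rightarrow> 'x \<times> (nat \<Rightarrow> 'a)" where
  "phiB phi (a, f) (x, g) =
     (phi a x, \<lambda>n. case n of 0 \<Rightarrow> a * g 0 | Suc m \<Rightarrow> f m * g (Suc m))"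

definition normY :: "('x::complex_vector \<Rightarrow> 'x \<Rightarrow> 'a::cstar_algebra) \<Rightarrow> 'x \<times> (nat \<Rightarrow> 'a) \<Rightarrow> real" where
  "normY ip y = sqrt (normB (ipY ip y y))"

definition theta :: "('x::complex_vector \<Rightarrow> 'a::cstar_algebra \<Rightarrow> 'x) \<Rightarrow> ('x \<Rightarrow> 'x \<Rightarrow> 'a) \<Rightarrow>
    'x \<times> (nat \<Rightarrow> 'a) \<Rightarrow> 'x \<times> (nat \<Rightarrow> 'a) \<Rightarrow> 'x \<times> (nat \<Rightarrow> 'a) \<Rightarrow> 'x \<times> (nat \<Rightarrow> 'a)" where
  "theta rm ip u v z = rmulY rm u (ipY ip v z)"

text \<open>Finite-rank operators span{Theta_{u,v} : u, v in Y} (scalars absorbed into u).\<close>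

definition finite_rankY where
  "finite_rankY rm ip phi =
     {S. \<exists>ps. set ps \<subseteq> carrierY phi \<times> carrierY phi \<and>
          (\<forall>z. S z = foldr (\<lambda>(u, v) acc. addY (theta rm ip u v z) acc) ps zeroY)}"

definition compactY where
  "compactY rm ip phi =
     {S. (\<forall>y\<in>carrierY phi. S y \<in> carrierY phi) \<and>
         (\<forall>e>0. \<exists>S'\<in>finite_rankY rm ip phi. \<forall>y\<in>carrierY phi.
             normY ip (addY (S y) (scalY (-1) (S' y))) \<le> e * normY ip y)}"

definition adjointY where
  "adjointY ip phi S S' \<longleftrightarrow>
     (\<forall>y\<in>carrierY phi. \<forall>y'\<in>carrierY phi. ipY ip (S y) y' = ipY ip y (S' y'))"

definition tail_representation ::
  "('x::complex_vector \<Rightarrow> 'a::cstar_algebra \<Rightarrow> 'x) \<Rightarrow> ('x \<Rightarrow> 'x \<Rightarrow> 'a) \<Rightarrow> ('a \<Rightarrow> 'x \<Rightarrow> 'x) \<Rightarrow>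
   ('a \<times> (nat \<Rightarrow> 'a) \<Rightarrow> 'c::cstar_algebra) \<Rightarrow> ('x \<times> (nat \<Rightarrow> 'a) \<Rightarrow> 'c) \<Rightarrow> bool" where
  "tail_representation rm ip phi rho t \<longleftrightarrow>
     (\<forall>b\<in>carrierB phi. \<forall>b'\<in>carrierB phi.
        rho (addB b b') = rho b + rho b' \<and> rho (multB b b') = rho b * rho b') \<and>
     (\<forall>c. \<forall>b\<in>carrierB phi. rho (scalB c b) = c *\<^sub>C rho b) \<and>
     (\<forall>b\<in>carrierB phi. rho (starB b) = star (rho b)) \<and>
     (\<forall>y\<in>carrierY phi. \<forall>y'\<in>carrierY phi. t (addY y y') = t y + t y') \<and>
     (\<forall>c. \<forall>y\<in>carrierY phi. t (scalY c y) = c *\<^sub>C t y) \<and>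
     (\<forall>y\<in>carrierY phi. \<forall>y'\<in>carrierY phi. star (t y) * t y' = rho (ipY ip y y')) \<and>
     (\<forall>b\<in>carrierB phi. \<forall>y\<in>carrierY phi. t (phiB phi b y) = rho b * t y) \<and>
     (\<forall>b\<in>carrierB phi. \<forall>y\<in>carrierY phi. t (rmulY rm y b) = t y * rho b)"

text \<open>rho1 is the *-homomorphism K(Y) -> C with rho1(Theta_{y,y'}) = t(y) t(y')^*
  (uniquely determined; it is contractive for the operator norm on Y).\<close>

definition is_pi1 ::
  "('x::complex_vector \<Rightarrow> 'a::cstar_algebra \<Rightarrow> 'x) \<Rightarrow> ('x \<Rightarrow> 'x \<Rightarrow> 'a) \<Rightarrow> ('a \<Rightarrow> 'x \<Rightarrow> 'x) \<Rightarrow>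
   ('x \<times> (nat \<Rightarrow> 'a) \<Rightarrow> 'c::cstar_algebra) \<Rightarrow>
   (('x \<times> (nat \<Rightarrow> 'a) \<Rightarrow> 'x \<times> (nat \<Rightarrow> 'a)) \<Rightarrow> 'c) \<Rightarrow> bool" where
  "is_pi1 rm ip phi t rho1 \<longleftrightarrow>
     (\<forall>u\<in>carrierY phi. \<forall>v\<in>carrierY phi. rho1 (theta rm ip u v) = t u * star (t v)) \<and>
     (\<forall>S\<in>compactY rm ip phi. \<forall>S'\<in>compactY rm ip phi.
        rho1 (\<lambda>z. addY (S z) (S' z)) = rho1 S + rho1 S' \<and> rho1 (S \<circ> S') = rho1 S * rho1 S') \<and>
     (\<forall>c. \<forall>S\<in>compactY rm ip phi. rho1 (\<lambda>z. scalY c (S z)) = c *\<^sub>C rho1 S) \<and>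
     (\<forall>S\<in>compactY rm ip phi. \<forall>S'. (\<forall>y\<in>carrierY phi. S' y \<in> carrierY phi) \<and>
        adjointY ip phi S S' \<longrightarrow> rho1 S' = star (rho1 S)) \<and>
     (\<forall>S\<in>compactY rm ip phi. \<forall>M\<ge>0. (\<forall>y\<in>carrierY phi. normY ip (S y) \<le> M * normY ip y)
        \<longrightarrow> norm (rho1 S) \<le> M)"

end

theory Submission
  imports Defs
begin

lemma star_zero_c: "star (0::'a::cstar_algebra) = 0"
proof -
  have "star (0::'a) = star (0 + 0)" by simp
  also have "... = star 0 + star 0" by (rule star_add)
  finally show ?thesis by simp
qed

lemma cstar_zero: "star x * x = 0 \<Longrightarrow> (x::'a::cstar_algebra) = 0"
  using cstar_identity[of x] by simp

lemma mult_star_zero: "x * star x = 0 \<Longrightarrow> (x::'a::cstar_algebra) = 0"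
proof -
  assume "x * star x = 0"
  hence "star (star x) * star x = 0" by (simp add: star_star)
  hence "star x = 0" by (rule cstar_zero)
  hence "star (star x) = 0" by (simp add: star_zero_c)
  thus ?thesis by (simp add: star_star)
qed

theorem mainTheorem5:
  fixes rm :: "'x::complex_vector \<Rightarrow> 'a::cstar_algebra \<Rightarrow> 'x"
    and ip :: "'x \<Rightarrow> 'x \<Rightarrow> 'a"
    and phi :: "'a \<Rightarrow> 'x \<Rightarrow> 'x"
    and rho :: "'a \<times> (nat \<Rightarrow> 'a) \<Rightarrow> 'c::cstar_algebra"
    and t :: "'x \<times> (nat \<Rightarrow> 'a) \<Rightarrow> 'c"
    and rho1 :: "('x \<times> (nat \<Rightarrow> 'a) \<Rightarrow> 'x \<times> (nat \<Rightarrow> 'a)) \<Rightarrow> 'c"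
  assumes corr: "correspondence rm ip phi"
    and rep: "tail_representation rm ip phi rho t"
    and rho1: "is_pi1 rm ip phi t rho1"
    and coisometric: "\<forall>b \<in> kerphi phi \<times> tailT phi. rho1 (phiB phi b) = rho b"
    and inj: "inj (\<lambda>a. rho (a, (\<lambda>n. 0)))"
  shows "\<forall>i. \<forall>f \<in> kerphi phi. rho (0, eps i f) = 0 \<longrightarrow> f = 0"
proof -
  have hm: "hilbert_module rm ip" using corr by (simp add: correspondence_def)
  have phiadd: "\<And>a b x. phi (a + b) x = phi a x + phi b x" using corr by (simp add: correspondence_def)
  have phimul: "\<And>a b x. phi (a * b) x = phi a (phi b x)" using corr by (simp add: correspondence_def)
  have phiadj: "\<And>a x y. ip (phi a x) y = ip x (phi (star a) y)" using corr by (simp add: correspondence_def)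
  have rmadd': "\<forall>x y a. rm (x + y) a = rm x a + rm y a" using hm unfolding hilbert_module_def by (elim conjE) assumption
  note rmadd = rmadd'[rule_format]
  have ipadd': "\<forall>x y z. ip x (y + z) = ip x y + ip x z" using hm unfolding hilbert_module_def by (elim conjE) assumption
  note ipadd = ipadd'[rule_format]
  have ipdef': "\<forall>x. ip x x = 0 \<longrightarrow> x = 0" using hm unfolding hilbert_module_def by (elim conjE) assumption
  note ipdef = ipdef'[rule_format]
  have rm0: "\<And>a. rm 0 a = 0" using rmadd[of 0 0] by simp
  have ip0: "\<And>x. ip x 0 = 0" using ipadd[of _ 0 0] by simp
  have phi0: "\<And>x. phi 0 x = 0" using phiadd[of 0 0] by simp
  have k0: "(0::'a) \<in> kerphi phi" by (simp add: kerphi_def phi0)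
  have kstar: "star f \<in> kerphi phi" if "f \<in> kerphi phi" for f
  proof -
    have "\<And>x. phi (star f) x = 0"
    proof -
      fix x
      have "ip (phi (star f) x) (phi (star f) x) = ip x (phi (star (star f)) (phi (star f) x))"
        by (rule phiadj)
      also have "... = 0" using that by (simp add: star_star kerphi_def ip0)
      finally show "phi (star f) x = 0" by (rule ipdef)
    qed
    thus ?thesis by (simp add: kerphi_def)
  qed
  have kmul: "f * g \<in> kerphi phi" if "f \<in> kerphi phi" for f g
    using that by (simp add: kerphi_def phimul)
  have epsT: "eps i f \<in> tailT phi" if "f \<in> kerphi phi" for i f
  proof -
    have "eventually (\<lambda>n. eps i f n = 0) sequentially"
      by (rule eventually_sequentiallyI[of "Suc i"]) (simp add: eps_def)
    hence "eps i f \<longlonglongrightarrow> 0" by (simp add: tendsto_eventually)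
    thus ?thesis using that k0 by (simp add: tailT_def eps_def)
  qed
  have zT: "(\<lambda>n. 0::'a) \<in> tailT phi" using k0 by (simp add: tailT_def)
  have rmul: "\<And>b b'. b \<in> carrierB phi \<Longrightarrow> b' \<in> carrierB phi \<Longrightarrow> rho (multB b b') = rho b * rho b'"
    using rep by (simp add: tail_representation_def)
  have tip: "\<And>y y'. y \<in> carrierY phi \<Longrightarrow> y' \<in> carrierY phi \<Longrightarrow> star (t y) * t y' = rho (ipY ip y y')"
    using rep by (simp add: tail_representation_def)
  have th: "\<And>u v. u \<in> carrierY phi \<Longrightarrow> v \<in> carrierY phi \<Longrightarrow> rho1 (theta rm ip u v) = t u * star (t v)"
    using rho1 by (simp add: is_pi1_def)
  have key: "rho1 (\<lambda>z. (0, \<lambda>n. if n = i then (f * star f) * snd z n else 0)) = 0"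
    if f: "f \<in> kerphi phi" and r: "rho (0, eps i f) = 0" for i f
  proof -
    define u where "u = ((0::'x), eps i f)"
    have uY: "u \<in> carrierY phi" using epsT[OF f] by (simp add: u_def carrierY_def)
    have sB: "(0::'a, eps i (star f)) \<in> carrierB phi" using epsT[OF kstar[OF f]] by (simp add: carrierB_def)
    have fB: "(0::'a, eps i f) \<in> carrierB phi" using epsT[OF f] by (simp add: carrierB_def)
    have "ipY ip u u = multB (0, eps i (star f)) (0, eps i f)"
      by (auto simp: u_def ip0 eps_def star_zero_c)
    hence "star (t u) * t u = 0" using tip[OF uY uY] rmul[OF sB fB] r by simp
    hence tu: "t u = 0" by (rule cstar_zero)
    have "theta rm ip u u = (\<lambda>z. (0, \<lambda>n. if n = i then (f * star f) * snd z n else 0))"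
      by (auto simp: fun_eq_iff theta_def u_def eps_def rm0 star_zero_c mult.assoc split: prod.split)
    thus ?thesis using th[OF uY uY] tu by simp
  qed
  show ?thesis
  proof
    fix i
    show "\<forall>f \<in> kerphi phi. rho (0, eps i f) = 0 \<longrightarrow> f = 0"
    proof (induction i)
      case 0
      show ?case
      proof (intro ballI impI)
        fix f assume f: "f \<in> kerphi phi" and r: "rho (0, eps 0 f) = 0"
        have a: "f * star f \<in> kerphi phi" by (rule kmul[OF f])
        have "phiB phi (f * star f, \<lambda>n. 0) = (\<lambda>z. (0, \<lambda>n. if n = 0 then (f * star f) * snd z n else 0))"
          using a by (auto simp: fun_eq_iff kerphi_def split: prod.split nat.split)
        moreover have "rho1 (phiB phi (f * star f, \<lambda>n. 0)) = rho (f * star f, \<lambda>n. 0)"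
          using coisometric a zT by blast
        ultimately have "rho (f * star f, \<lambda>n. 0) = 0" using key[OF f r] by simp
        moreover have "rho (0, \<lambda>n. 0) = 0"
        proof -
          have zB: "((0::'a), (\<lambda>n. 0::'a)) \<in> carrierB phi" using zT by (simp add: carrierB_def)
          have "rho (addB (0, \<lambda>n. 0) (0, \<lambda>n. 0)) = rho (0, \<lambda>n. 0) + rho (0, \<lambda>n. 0)"
            using rep zB unfolding tail_representation_def by blast
          thus ?thesis by simp
        qed
        ultimately have "f * star f = 0" using injD[OF inj, of "f * star f" 0] by simp
        thus "f = 0" by (rule mult_star_zero)
      qed
    next
      case (Suc m)
      show ?case
      proof (intro ballI impI)
        fix f assume f: "f \<in> kerphi phi" and r: "rho (0, eps (Suc m) f) = 0"
        have a: "f * star f \<in> kerphi phi" by (rule kmul[OF f])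
        have "phiB phi (0, eps m (f * star f)) = (\<lambda>z. (0, \<lambda>n. if n = Suc m then (f * star f) * snd z n else 0))"
          by (auto simp: fun_eq_iff phi0 eps_def split: prod.split nat.split)
        moreover have "rho1 (phiB phi (0, eps m (f * star f))) = rho (0, eps m (f * star f))"
          using coisometric k0 epsT[OF a] by blast
        ultimately have "rho (0, eps m (f * star f)) = 0" using key[OF f r] by simp
        hence "f * star f = 0" using Suc.IH a by simp
        thus "f = 0" by (rule mult_star_zero)
      qed
    qed
  qed
qed

end
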